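(* Let $W$ be $\{0,1\}$-valued, let $x\in\mathbb X$ and $B\Subset\mathbb X$. Then \[ (\mathfrak h/B)(x)=\begin{cases}\{e\setminus B\mid e\in\mathfrak h(x)\}&\text{if }x\notin B,\\ \{\{x\}\}&\text{if }x\in B.\end{cases} \] In particular, $\{x\}\notin(\mathfrak h/B)(x)$ implies both $\deg_{\mathfrak h/B}(x)\le\deg_{\mathfrak h}(x)$ and $\{x\}\notin\mathfrak h$.
   Context: $\mathbb X$ is a finite or countably infinite set; $e\Subset\mathbb X$ means finite subset. $W:\{X\Subset\mathbb X\}\to\{0,1\}$ is a pure hard-core interaction, and $\mathfrak h=\{e\Subset\mathbb X\mid W(e)=0\}$. The conditional interaction is $W(X\mid B)=\prod_{C\subset B}W(X\cup C)$ if $X\cap B=\varnothing$, $W(X\mid B)=0$ if $X=\{y\}$ with $y\in B$, and $W(X\mid B)=1$ otherwise; it is again $\{0,1\}$-valued, and $\mathfrak h/B=\{e\Subset\mathbb X\mid W(e\mid B)=0\}$. For a set $\mathfrak g$ of finite subsets, $\mathfrak g(x)=\{e\in\mathfrak g\mid x\in e\}$ and $\deg_{\mathfrak g}(x)=|\mathfrak g(x)|\in\{0,1,2,\dots\}\cup\{\infty\}$. *)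

theory Defs
  imports Main "HOL-Library.Countable_Set" "HOL-Library.Extended_Nat"
begin

(* Ground set \<X> is a countable (finite or countably infinite) set X :: 'a set;
   an interaction W assigns a value to each finite subset of X (values on
   other sets are irrelevant). *)

definition hc :: "'a set \<Rightarrow> ('a set \<Rightarrow> nat) \<Rightarrow> 'a set set" where
  "hc X W = {e. finite e \<and> e \<subseteq> X \<and> W e = 0}"

definition cond_int :: "('a set \<Rightarrow> nat) \<Rightarrow> 'a set \<Rightarrow> 'a set \<Rightarrow> nat" where
  "cond_int W B e =
     (if e \<inter> B = {} then (\<Prod>C\<in>Pow B. W (e \<union> C))
      else if (\<exists>y\<in>B. e = {y}) then 0 else 1)"

definition hc_cond :: "'a set \<Rightarrow> ('a set \<Rightarrow> nat) \<Rightarrow> 'a set \<Rightarrow> 'a set set" where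
  "hc_cond X W B = {e. finite e \<and> e \<subseteq> X \<and> cond_int W B e = 0}"

definition star :: "'a set set \<Rightarrow> 'a \<Rightarrow> 'a set set" where
  "star g x = {e \<in> g. x \<in> e}"

definition deg :: "'a set set \<Rightarrow> 'a \<Rightarrow> enat" where
  "deg g x = (if finite (star g x) then enat (card (star g x)) else \<infinity>)"

end

theory Submission
  imports Defs
begin

lemma star_eq:
  fixes X :: "'a set" and W :: "'a set \<Rightarrow> nat" and x :: 'a and B :: "'a set"
  assumes "x \<in> X" and "finite B" and "B \<subseteq> X"
  shows "star (hc_cond X W B) x =
           (if x \<notin> B then (\<lambda>e. e - B) ` star (hc X W) x else {{x}})"
proof (cases "x \<in> B")
  case True
  show ?thesis
  proof -
    have "star (hc_cond X W B) x = {{x}}"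
    proof (rule set_eqI, rule iffI)
      fix e assume "e \<in> star (hc_cond X W B) x"
      hence e: "x \<in> e" "cond_int W B e = 0" by (auto simp: star_def hc_cond_def)
      hence "e \<inter> B \<noteq> {}" using True by auto
      with e show "e \<in> {{x}}" by (auto simp: cond_int_def split: if_splits)
    next
      fix e assume "e \<in> {{x}}"
      thus "e \<in> star (hc_cond X W B) x" using True assms
        by (auto simp: star_def hc_cond_def cond_int_def)
    qed
    thus ?thesis using True by simp
  qed
next
  case False
  have "star (hc_cond X W B) x = (\<lambda>e. e - B) ` star (hc X W) x"
  proof (rule set_eqI, rule iffI)
    fix e assume "e \<in> star (hc_cond X W B) x"
    hence e: "x \<in> e" "cond_int W B e = 0" "finite e" "e \<subseteq> X"
      by (auto simp: star_def hc_cond_def)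
    have dis: "e \<inter> B = {}"
    proof (rule ccontr)
      assume "e \<inter> B \<noteq> {}"
      with e(2) obtain y where "y \<in> B" "e = {y}"
        by (auto simp: cond_int_def split: if_splits)
      with e(1) False show False by auto
    qed
    with e(2) have "(\<Prod>C\<in>Pow B. W (e \<union> C)) = 0" by (simp add: cond_int_def)
    with assms(2) obtain C where C: "C \<subseteq> B" "W (e \<union> C) = 0" by auto
    have "e \<union> C \<in> star (hc X W) x"
      using C e assms finite_subset[OF C(1) assms(2)]
      by (auto simp: star_def hc_def)
    moreover have "e = (e \<union> C) - B" using dis C by auto
    ultimately show "e \<in> (\<lambda>e. e - B) ` star (hc X W) x" by blast
  next
    fix e assume "e \<in> (\<lambda>e. e - B) ` star (hc X W) x"
    then obtain f where f: "f \<in> star (hc X W) x" "e = f - B" by auto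
    hence f2: "finite f" "f \<subseteq> X" "W f = 0" "x \<in> f" by (auto simp: star_def hc_def)
    have "e \<union> (f \<inter> B) = f" using f by auto
    hence "(\<Prod>C\<in>Pow B. W (e \<union> C)) = 0"
      using assms(2) f2(3) by (auto intro!: bexI[of _ "f \<inter> B"])
    moreover have "e \<inter> B = {}" using f by auto
    ultimately show "e \<in> star (hc_cond X W B) x" using f f2 False
      by (auto simp: star_def hc_cond_def cond_int_def)
  qed
  thus ?thesis using False by simp
qed

theorem lemma5p3:
  fixes X :: "'a set" and W :: "'a set \<Rightarrow> nat" and x :: 'a and B :: "'a set"
  assumes "countable X"
    and "\<And>e. finite e \<Longrightarrow> e \<subseteq> X \<Longrightarrow> W e \<in> {0, 1}"
    and "x \<in> X"
    and "finite B" and "B \<subseteq> X"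
  shows "star (hc_cond X W B) x =
           (if x \<notin> B then (\<lambda>e. e - B) ` star (hc X W) x else {{x}})
       \<and> ({x} \<notin> star (hc_cond X W B) x \<longrightarrow>
            deg (hc_cond X W B) x \<le> deg (hc X W) x \<and> {x} \<notin> hc X W)"
proof -
  note S = star_eq[OF assms(3,4,5), of W]
  have "deg (hc_cond X W B) x \<le> deg (hc X W) x \<and> {x} \<notin> hc X W"
    if nx: "{x} \<notin> star (hc_cond X W B) x"
  proof -
    have xB: "x \<notin> B" using nx S by auto
    hence img: "star (hc_cond X W B) x = (\<lambda>e. e - B) ` star (hc X W) x" using S by simp
    have "deg (hc_cond X W B) x \<le> deg (hc X W) x"
    proof (cases "finite (star (hc X W) x)")
      case True
      thus ?thesis unfolding deg_def img by (simp add: card_image_le)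
    next
      case False
      thus ?thesis unfolding deg_def by simp
    qed
    moreover have "{x} \<notin> hc X W"
    proof
      assume "{x} \<in> hc X W"
      hence "{x} \<in> star (hc X W) x" by (simp add: star_def)
      hence "{x} - B \<in> star (hc_cond X W B) x" using img by blast
      moreover have "{x} - B = {x}" using xB by auto
      ultimately show False using nx by simp
    qed
    ultimately show ?thesis by simp
  qed
  with S show ?thesis by blast
qed

end
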